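(* Let $\sigma\subset N_{\mathbb{Q}}$ be a strongly convex polyhedral cone, $n=\dim N_{\mathbb{Q}}$, and $P\in\operatorname{Pol}_{\sigma^\vee}(M)$. Then for every positive integer $e\ge n-1$ the polyhedron $eP$ is normal. In particular, every $\mathbb{T}$-stable integrally closed ideal of an affine toric surface $\operatorname{Spec}\mathbf{k}[\sigma^\vee\cap M]$ is normal.
   Context: $\mathbf{k}$ is algebraically closed of characteristic $0$; $M,N$ dual lattices. $\operatorname{Pol}_{\sigma^\vee}(M)$ is the set of polyhedra $P=Q+\sigma^\vee\subset M_{\mathbb{Q}}$ with $Q$ a polytope whose vertices lie in $M$. For $e\ge1$, $eP$ is the image of $P$ under the homothety of ratio $e$. $P$ is normal if for every integer $e\ge1$, $(eP)\cap M=\{m_1+\dots+m_e: m_1,\dots,m_e\in P\cap M\}$. An ideal $I$ of a domain is normal if $I^i$ is integrally closed for all $i\ge1$. *)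

theory Defs
  imports "HOL-Analysis.Finite_Cartesian_Product"
begin

text \<open>M_Q = N_Q = rat^'n (n = CARD('n)); M = N = integer points; the pairing is the
standard dot product.\<close>

definition lattice_pts :: "(rat ^ 'n) set" where
  "lattice_pts = {m. \<forall>i. m $ i \<in> \<int>}"

definition qpair :: "rat ^ 'n \<Rightarrow> rat ^ 'n \<Rightarrow> rat" where
  "qpair m u = (\<Sum>i\<in>UNIV. m $ i * u $ i)"

definition cone_gen :: "(rat ^ 'n) set \<Rightarrow> (rat ^ 'n) set" where
  "cone_gen S = {x. \<exists>c. (\<forall>v\<in>S. c v \<ge> 0) \<and> x = (\<Sum>v\<in>S. c v *s v)}"

definition polyhedral_cone :: "(rat ^ 'n) set \<Rightarrow> bool" where
  "polyhedral_cone \<sigma> \<longleftrightarrow> (\<exists>S. finite S \<and> \<sigma> = cone_gen S)"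

definition strongly_convex :: "(rat ^ 'n) set \<Rightarrow> bool" where
  "strongly_convex \<sigma> \<longleftrightarrow> (\<forall>x. x \<in> \<sigma> \<and> - x \<in> \<sigma> \<longrightarrow> x = 0)"

definition dual_cone :: "(rat ^ 'n) set \<Rightarrow> (rat ^ 'n) set" where
  "dual_cone \<sigma> = {m. \<forall>u\<in>\<sigma>. qpair m u \<ge> 0}"

definition qconv_hull :: "(rat ^ 'n) set \<Rightarrow> (rat ^ 'n) set" where
  "qconv_hull V = {x. \<exists>c. (\<forall>v\<in>V. c v \<ge> 0) \<and> (\<Sum>v\<in>V. c v) = 1 \<and> x = (\<Sum>v\<in>V. c v *s v)}"

text \<open>A polytope whose vertices lie in M is the convex hull of a finite nonempty set of lattice points.\<close>
definition lattice_polytope :: "(rat ^ 'n) set \<Rightarrow> bool" where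
  "lattice_polytope Q \<longleftrightarrow> (\<exists>V. finite V \<and> V \<noteq> {} \<and> V \<subseteq> lattice_pts \<and> Q = qconv_hull V)"

definition Pol :: "(rat ^ 'n) set \<Rightarrow> (rat ^ 'n) set set" where
  "Pol \<sigma> = {P. \<exists>Q. lattice_polytope Q \<and> P = {q + s | q s. q \<in> Q \<and> s \<in> dual_cone \<sigma>}}"

definition scale_poly :: "nat \<Rightarrow> (rat ^ 'n) set \<Rightarrow> (rat ^ 'n) set" where
  "scale_poly e P = (\<lambda>x. of_nat e *s x) ` P"

definition normal_poly :: "(rat ^ 'n) set \<Rightarrow> bool" where
  "normal_poly P \<longleftrightarrow> (\<forall>k::nat. k \<ge> 1 \<longrightarrow>
     scale_poly k P \<inter> lattice_pts =
       {(\<Sum>i<k. m i) | m. \<forall>i<k. m i \<in> P \<inter> lattice_pts})"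

end

theory Submission
  imports Defs "HOL-Analysis.Cartesian_Space" "HOL-Library.Cardinality"
begin

definition cmb :: "(rat ^ 'n) set \<Rightarrow> rat \<Rightarrow> (rat ^ 'n) set" where
  "cmb V a = {x. \<exists>c. (\<forall>v\<in>V. 0 \<le> c v) \<and> sum c V = a \<and> x = (\<Sum>v\<in>V. c v *s v)}"

lemma cmbI: "(\<forall>v\<in>V. 0 \<le> c v) \<Longrightarrow> sum c V = a \<Longrightarrow> x = (\<Sum>v\<in>V. c v *s v) \<Longrightarrow> x \<in> cmb V a"
  unfolding cmb_def by blast

lemma cmbE: assumes "x \<in> cmb V a"
  obtains c where "\<forall>v\<in>V. 0 \<le> c v" "sum c V = a" "x = (\<Sum>v\<in>V. c v *s v)"
  using assms unfolding cmb_def by blast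

lemma qconv_cmb: "qconv_hull V = cmb V 1"
  unfolding qconv_hull_def cmb_def by simp

lemma cmb_zero: "0 \<in> cmb V 0"
  by (rule cmbI[where c="\<lambda>_. 0"]) auto

lemma cmb_add: assumes "x \<in> cmb V a" "y \<in> cmb V b" shows "x + y \<in> cmb V (a + b)"
proof -
  obtain c where c: "\<forall>v\<in>V. 0 \<le> c v" "sum c V = a" "x = (\<Sum>v\<in>V. c v *s v)" using assms(1) by (rule cmbE)
  obtain d where d: "\<forall>v\<in>V. 0 \<le> d v" "sum d V = b" "y = (\<Sum>v\<in>V. d v *s v)" using assms(2) by (rule cmbE)
  show ?thesis
    by (rule cmbI[where c="\<lambda>v. c v + d v"]) (use c d in \<open>auto simp: sum.distrib vec.scale_left_distrib\<close>)
qed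

lemma cmb_scale: assumes "x \<in> cmb V a" "0 \<le> r" shows "r *s x \<in> cmb V (r * a)"
proof -
  obtain c where c: "\<forall>v\<in>V. 0 \<le> c v" "sum c V = a" "x = (\<Sum>v\<in>V. c v *s v)" using assms(1) by (rule cmbE)
  show ?thesis
    by (rule cmbI[where c="\<lambda>v. r * c v"]) (use c assms(2) in \<open>auto simp: sum_distrib_left vec.scale_sum_right\<close>)
qed

lemma cmb_sum: assumes "finite T" "\<forall>t\<in>T. f t \<in> cmb V (a t)"
  shows "sum f T \<in> cmb V (sum a T)"
  using assms
proof (induction T rule: finite_induct)
  case empty then show ?case using cmb_zero by simp
next
  case (insert t T)
  then show ?case by (simp add: cmb_add)
qed

lemma cmb_mono: assumes "finite T'" "T \<subseteq> T'" shows "cmb T a \<subseteq> cmb T' a"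
proof
  fix x assume "x \<in> cmb T a"
  then obtain c where c: "\<forall>v\<in>T. 0 \<le> c v" "sum c T = a" "x = (\<Sum>v\<in>T. c v *s v)" by (rule cmbE)
  let ?d = "\<lambda>v. if v \<in> T then c v else 0"
  have "sum ?d T' = sum c T"
    by (rule sum.mono_neutral_cong_right) (use assms in auto)
  moreover have "(\<Sum>v\<in>T'. ?d v *s v) = (\<Sum>v\<in>T. c v *s v)"
    by (rule sum.mono_neutral_cong_right) (use assms in auto)
  ultimately show "x \<in> cmb T' a"
    by (intro cmbI[where c="?d"]) (use c in auto)
qed

lemma cmb_point: assumes "finite V" "t \<in> V" shows "t \<in> cmb V 1"
proof (rule cmbI[where c="\<lambda>v. if v = t then 1 else 0"])
  have "(\<Sum>v\<in>V. (if v = t then 1 else 0) *s v) = (\<Sum>v\<in>V. if v = t then t else 0)"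
    by (rule sum.cong) auto
  then show "t = (\<Sum>v\<in>V. (if v = t then 1 else 0) *s v)" using assms by simp
qed (use assms in auto)

lemma cmb_compose: assumes "finite T" "T \<subseteq> cmb V 1" "x \<in> cmb T a"
  shows "x \<in> cmb V a"
proof -
  obtain c where c: "\<forall>v\<in>T. 0 \<le> c v" "sum c T = a" "x = (\<Sum>v\<in>T. c v *s v)" using assms(3) by (rule cmbE)
  have "(\<Sum>v\<in>T. c v *s v) \<in> cmb V (\<Sum>v\<in>T. c v * 1)"
  proof (rule cmb_sum[OF assms(1)], rule ballI)
    fix t assume "t \<in> T"
    then have "t \<in> cmb V 1" "0 \<le> c t" using assms(2) c by auto
    then show "c t *s t \<in> cmb V (c t * 1)" by (rule cmb_scale)
  qed
  then show ?thesis using c by simp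
qed

lemma cmb_compose_sub: assumes "finite T" "finite V" "T \<subseteq> cmb V 1" shows "cmb T a \<subseteq> cmb V a"
  using cmb_compose assms by blast

lemma lat_iff: "x \<in> lattice_pts \<longleftrightarrow> (\<forall>i. x $ i \<in> \<int>)"
  unfolding lattice_pts_def by simp

lemma lat_add: "x \<in> lattice_pts \<Longrightarrow> y \<in> lattice_pts \<Longrightarrow> x + y \<in> lattice_pts"
  by (simp add: lat_iff)
lemma lat_diff: "x \<in> lattice_pts \<Longrightarrow> y \<in> lattice_pts \<Longrightarrow> x - y \<in> lattice_pts"
  by (simp add: lat_iff)
lemma lat_zero: "0 \<in> lattice_pts"
  by (simp add: lat_iff)
lemma lat_sum: "finite T \<Longrightarrow> (\<forall>t\<in>T. f t \<in> lattice_pts) \<Longrightarrow> sum f T \<in> lattice_pts"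
  by (induction T rule: finite_induct) (auto simp: lat_zero lat_add)

lemma finite_lat_box:
  fixes S :: "rat set"
  assumes "finite S"
  shows "finite {x :: rat ^ 'n. \<forall>i. x $ i \<in> S}"
proof -
  have "{x :: rat ^ 'n. \<forall>i. x $ i \<in> S} \<subseteq> vec_lambda ` (PiE UNIV (\<lambda>_. S))"
  proof
    fix x :: "rat ^ 'n" assume "x \<in> {x. \<forall>i. x $ i \<in> S}"
    then have "vec_nth x \<in> PiE UNIV (\<lambda>_. S)" by auto
    then show "x \<in> vec_lambda ` (PiE UNIV (\<lambda>_. S))"
      by (metis image_eqI vec_nth_inverse)
  qed
  moreover have "finite (PiE (UNIV :: 'n set) (\<lambda>_. S))"
    using assms by (intro finite_PiE) auto
  ultimately show ?thesis using finite_subset by blast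
qed

lemma finite_lat_cmb:
  assumes "finite V"
  shows "finite (cmb V 1 \<inter> lattice_pts)"
proof -
  define B where "B = (\<Sum>v\<in>V. \<Sum>i\<in>UNIV. \<bar>v $ i\<bar>)"
  define S where "S = (of_int :: int \<Rightarrow> rat) ` {-\<lceil>B\<rceil>..\<lceil>B\<rceil>}"
  have "cmb V 1 \<inter> lattice_pts \<subseteq> {x. \<forall>i. x $ i \<in> S}"
  proof (safe)
    fix x :: "rat ^ 'a" and i
    assume x: "x \<in> cmb V 1" and xl: "x \<in> lattice_pts"
    obtain c where c: "\<forall>v\<in>V. 0 \<le> c v" "sum c V = 1" "x = (\<Sum>v\<in>V. c v *s v)" using x by (rule cmbE)
    have cle: "c v \<le> 1" if "v \<in> V" for v
      using member_le_sum[of v V c] c that assms by auto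
    have "\<bar>x $ i\<bar> = \<bar>\<Sum>v\<in>V. c v * v $ i\<bar>" using c by simp
    also have "\<dots> \<le> (\<Sum>v\<in>V. \<bar>c v * v $ i\<bar>)" by (rule sum_abs)
    also have "\<dots> \<le> (\<Sum>v\<in>V. \<bar>v $ i\<bar>)"
    proof (rule sum_mono)
      fix v assume "v \<in> V"
      then show "\<bar>c v * v $ i\<bar> \<le> \<bar>v $ i\<bar>" using c cle[of v]
        by (simp add: abs_mult mult_left_le_one_le)
    qed
    also have "\<dots> \<le> B" unfolding B_def
      by (rule sum_mono) (rule member_le_sum[where f="\<lambda>i. \<bar>_ $ i\<bar>"], auto)
    finally have xb: "\<bar>x $ i\<bar> \<le> B" .
    obtain z where z: "x $ i = of_int z" using xl by (auto simp: lat_iff elim: Ints_cases)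
    have "\<bar>of_int z\<bar> \<le> (of_int \<lceil>B\<rceil> :: rat)" using xb z le_of_int_ceiling[of B] by linarith
    then have "\<bar>z\<bar> \<le> \<lceil>B\<rceil>" by linarith
    then have "z \<in> {-\<lceil>B\<rceil>..\<lceil>B\<rceil>}" by auto
    then show "x $ i \<in> S" unfolding S_def using z by blast
  qed
  moreover have "finite S" unfolding S_def by simp
  ultimately show ?thesis using finite_lat_box finite_subset by blast
qed


definition aug :: "rat ^ 'n \<Rightarrow> rat ^ ('n option)" where
  "aug t = (\<chi> i. case i of None \<Rightarrow> 1 | Some j \<Rightarrow> t $ j)"

lemma aug_inj: "inj aug"
proof (rule injI)
  fix x y :: "rat ^ 'n" assume "aug x = aug y"
  then have "aug x $ Some i = aug y $ Some i" for i by simp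
  then show "x = y" by (simp add: aug_def vec_eq_iff)
qed

lemma affine_dep:
  fixes T :: "(rat ^ 'n) set"
  assumes "finite T" "CARD('n) + 1 < card T"
  shows "\<exists>\<alpha>. sum \<alpha> T = 0 \<and> (\<Sum>t\<in>T. \<alpha> t *s t) = 0 \<and> (\<exists>t\<in>T. \<alpha> t \<noteq> 0)"
proof -
  let ?A = "aug ` T"
  have cardA: "card ?A = card T" using aug_inj by (meson card_image inj_on_subset subset_UNIV)
  have "\<not> vec.independent ?A"
  proof
    assume "vec.independent ?A"
    then have "card ?A \<le> vec.dim (UNIV :: (rat ^ 'n option) set)"
      by (intro vec.independent_card_le_dim) auto
    also have "\<dots> = CARD('n option)" by (simp add: card_cart_basis)
    finally show False using assms cardA by simp
  qed
  then obtain c where c: "(\<Sum>v\<in>?A. c v *s v) = 0" "\<exists>v\<in>?A. c v \<noteq> 0"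
    using assms(1) by (auto simp: vec.independent_explicit)
  define \<alpha> where "\<alpha> = c \<circ> aug"
  have eq: "(\<Sum>t\<in>T. \<alpha> t *s aug t) = 0"
  proof -
    have "inj_on aug T" using aug_inj by (meson inj_on_subset subset_UNIV)
    then have "(\<Sum>v\<in>?A. c v *s v) = (\<Sum>t\<in>T. c (aug t) *s aug t)" by (rule sum.reindex[unfolded comp_def])
    then show ?thesis using c(1) by (simp add: \<alpha>_def)
  qed
  have "sum \<alpha> T = (\<Sum>t\<in>T. \<alpha> t *s aug t) $ None" by (simp add: aug_def)
  then have s0: "sum \<alpha> T = 0" using eq by simp
  have "(\<Sum>t\<in>T. \<alpha> t *s t) $ j = (\<Sum>t\<in>T. \<alpha> t *s aug t) $ Some j" for j by (simp add: aug_def)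
  then have v0: "(\<Sum>t\<in>T. \<alpha> t *s t) = 0" using eq by (simp add: vec_eq_iff)
  have "\<exists>t\<in>T. \<alpha> t \<noteq> 0" using c(2) by (auto simp: \<alpha>_def)
  then show ?thesis using s0 v0 by blast
qed


lemma wsum_diff: "(\<Sum>t\<in>T. (a t - b t) *s t) = (\<Sum>t\<in>T. a t *s t) - (\<Sum>t\<in>T. b t *s (t :: rat ^ 'n))"
  by (simp add: vec.scale_left_diff_distrib sum_subtractf)

lemma wsum_add: "(\<Sum>t\<in>T. (a t + b t) *s t) = (\<Sum>t\<in>T. a t *s t) + (\<Sum>t\<in>T. b t *s (t :: rat ^ 'n))"
  by (simp add: vec.scale_left_distrib sum.distrib)

lemma wsum_scale: "(\<Sum>t\<in>T. (r * a t) *s t) = r *s (\<Sum>t\<in>T. a t *s (t :: rat ^ 'n))"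
  by (simp add: vec.scale_sum_right vec.scale_scale)

lemma wsum_delta: assumes "finite T" "t \<in> T"
  shows "(\<Sum>s\<in>T. (if s = t then 1 else 0) *s s) = (t :: rat ^ 'n)"
proof -
  have "(\<Sum>s\<in>T. (if s = t then 1 else 0) *s s) = (\<Sum>s\<in>T. if s = t then t else 0)"
    by (rule sum.cong) auto
  then show ?thesis using assms by simp
qed

lemma wsum_one: "(\<Sum>s\<in>T. 1 *s s) = (\<Sum>s\<in>T. (s :: rat ^ 'n))"
  by simp

lemma drop_zero:
  assumes "finite T" "\<forall>t\<in>T. 0 \<le> (f t :: rat)"
  shows "sum f {t\<in>T. 0 < f t} = sum f T"
    and "(\<Sum>t\<in>{t\<in>T. 0 < f t}. f t *s t) = (\<Sum>t\<in>T. f t *s (t :: rat ^ 'n))"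
proof -
  show "sum f {t\<in>T. 0 < f t} = sum f T"
    by (rule sum.mono_neutral_left) (use assms in \<open>auto simp: order_le_less\<close>)
  show "(\<Sum>t\<in>{t\<in>T. 0 < f t}. f t *s t) = (\<Sum>t\<in>T. f t *s t)"
    by (rule sum.mono_neutral_left) (use assms in \<open>auto simp: order_le_less\<close>)
qed

lemma restrict_sum:
  assumes "finite T" "S \<subseteq> T"
  shows "(\<Sum>t\<in>T. if t \<in> S then b t else 0) = sum b S"
    and "(\<Sum>t\<in>T. (if t \<in> S then b t else 0) *s t) = (\<Sum>t\<in>S. b t *s (t :: rat ^ 'n))"
proof -
  show "(\<Sum>t\<in>T. if t \<in> S then b t else 0) = sum b S"
    by (rule sym, rule sum.mono_neutral_cong_left) (use assms in auto)
  show "(\<Sum>t\<in>T. (if t \<in> S then b t else 0) *s t) = (\<Sum>t\<in>S. b t *s t)"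
    by (rule sym, rule sum.mono_neutral_cong_left) (use assms in auto)
qed


lemma peel:
  fixes x :: "rat ^ 'n" and L :: "(rat ^ 'n) set"
  assumes finL: "finite L" and Llat: "L \<subseteq> lattice_pts"
    and Lcl: "\<And>T. T \<subseteq> L \<Longrightarrow> cmb T 1 \<inter> lattice_pts \<subseteq> L"
    and T0: "T0 \<subseteq> L" and x0: "x \<in> cmb T0 (of_nat (Suc m))" and xlat: "x \<in> lattice_pts"
    and n: "CARD('n) \<le> Suc m"
  shows "\<exists>p\<in>L. x - p \<in> cmb L (of_nat m)"
proof -
  define R where "R T \<longleftrightarrow> T \<subseteq> L \<and> (\<exists>lam. (\<forall>t\<in>T. 0 < lam t) \<and> sum lam T = of_nat (Suc m)
      \<and> x = (\<Sum>t\<in>T. lam t *s t))" for T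
  define f where "f T = card (cmb T 1 \<inter> lattice_pts) + card T" for T :: "(rat ^ 'n) set"
  have finsub: "finite T" if "T \<subseteq> L" for T using that finL finite_subset by blast
  have fincmb: "finite (cmb T 1 \<inter> lattice_pts)" if "T \<subseteq> L" for T
    using Lcl[OF that] finL finite_subset by blast
  have "R {t\<in>T0. 0 < c t}" if c: "\<forall>v\<in>T0. 0 \<le> c v" "sum c T0 = of_nat (Suc m)" "x = (\<Sum>v\<in>T0. c v *s v)" for c
    unfolding R_def
    using T0 c drop_zero[of T0 c] finsub[OF T0] by (intro conjI exI[of _ c]) auto
  moreover obtain c where "\<forall>v\<in>T0. 0 \<le> c v" "sum c T0 = of_nat (Suc m)" "x = (\<Sum>v\<in>T0. c v *s v)"
    using x0 by (rule cmbE)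
  ultimately have "\<exists>T. R T" by blast
  then obtain T where RT: "R T" and minT: "\<And>T'. R T' \<Longrightarrow> f T \<le> f T'"
    using ex_has_least_nat[of R _ f] by blast
  from RT obtain lam where TL: "T \<subseteq> L" and lpos: "\<forall>t\<in>T. 0 < lam t"
    and lsum: "sum lam T = of_nat (Suc m)" and lx: "x = (\<Sum>t\<in>T. lam t *s t)"
    unfolding R_def by blast
  have finT: "finite T" using finsub[OF TL] .
  have Tlat: "T \<subseteq> lattice_pts" using TL Llat by blast
  have indep: "\<forall>t\<in>T. \<alpha> t = 0" if a1: "sum \<alpha> T = 0" and a2: "(\<Sum>t\<in>T. \<alpha> t *s t) = 0" for \<alpha>
  proof (rule ccontr)
    assume "\<not> (\<forall>t\<in>T. \<alpha> t = 0)"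
    have "\<exists>t\<in>T. 0 < \<alpha> t"
    proof (rule ccontr)
      assume "\<not> (\<exists>t\<in>T. 0 < \<alpha> t)"
      then have nn0: "\<forall>t\<in>T. 0 \<le> - \<alpha> t" by (simp add: not_less)
      have "sum (\<lambda>t. - \<alpha> t) T = 0" using a1 by (simp add: sum_negf)
      moreover have "(sum (\<lambda>t. - \<alpha> t) T = 0) = (\<forall>t\<in>T. - \<alpha> t = 0)"
        by (rule sum_nonneg_eq_0_iff[OF finT]) (use nn0 in blast)
      ultimately have "\<forall>t\<in>T. - \<alpha> t = 0" by blast
      then show False using \<open>\<not> (\<forall>t\<in>T. \<alpha> t = 0)\<close> by simp
    qed
    define A where "A = {t\<in>T. 0 < \<alpha> t}"
    have finA: "finite A" unfolding A_def using finT by simp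
    have neA: "A \<noteq> {}" unfolding A_def using \<open>\<exists>t\<in>T. 0 < \<alpha> t\<close> by blast
    define \<tau> where "\<tau> = Min ((\<lambda>t. lam t / \<alpha> t) ` A)"
    have "\<tau> \<in> (\<lambda>t. lam t / \<alpha> t) ` A" unfolding \<tau>_def using finA neA by (intro Min_in) auto
    then obtain t0 where t0A: "t0 \<in> A" and t0: "\<tau> = lam t0 / \<alpha> t0" by blast
    have tle: "\<tau> \<le> lam t / \<alpha> t" if "t \<in> A" for t
      unfolding \<tau>_def by (intro Min_le finite_imageI imageI finA that)
    have t0T: "t0 \<in> T" and at0: "0 < \<alpha> t0" using t0A by (auto simp: A_def)
    have tpos: "0 < \<tau>" unfolding t0 using lpos t0T at0 by simp
    define lam' where "lam' t = lam t - \<tau> * \<alpha> t" for t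
    have nn: "0 \<le> lam' t" if "t \<in> T" for t
    proof (cases "0 < \<alpha> t")
      case True
      then have "\<tau> \<le> lam t / \<alpha> t" using tle[of t] that True by (simp add: A_def)
      then show ?thesis using True by (simp add: lam'_def pos_le_divide_eq)
    next
      case False
      then have "\<tau> * \<alpha> t \<le> 0" using tpos by (simp add: mult_nonneg_nonpos)
      moreover have "0 < lam t" using lpos that by blast
      ultimately show ?thesis by (simp add: lam'_def)
    qed
    have z: "lam' t0 = 0" using at0 unfolding t0 lam'_def by simp
    define T' where "T' = {t\<in>T. 0 < lam' t}"
    have s1: "sum lam' T = of_nat (Suc m)"
      using lsum a1 by (simp add: lam'_def sum_subtractf sum_distrib_left[symmetric])
    have s2: "(\<Sum>t\<in>T. lam' t *s t) = x"
      using lx a2 unfolding lam'_def wsum_diff wsum_scale by simp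
    have RT': "R T'"
      unfolding R_def
      using TL drop_zero[of T lam', OF finT] nn s1 s2
      by (intro conjI exI[of _ lam']) (auto simp: T'_def)
    have "T' \<subseteq> T - {t0}" using z by (auto simp: T'_def)
    then have "T' \<subset> T" using t0T by blast
    then have c1: "card T' < card T" using finT psubset_card_mono by blast
    have "cmb T' 1 \<subseteq> cmb T 1" by (rule cmb_mono) (use finT in \<open>auto simp: T'_def\<close>)
    then have c2: "card (cmb T' 1 \<inter> lattice_pts) \<le> card (cmb T 1 \<inter> lattice_pts)"
      by (intro card_mono fincmb TL) auto
    have "f T' < f T" using c1 c2 by (simp add: f_def)
    then show False using minT[OF RT'] by simp
  qed
  have cardT: "card T \<le> CARD('n) + 1"
  proof (rule ccontr)
    assume "\<not> ?thesis"
    then have "CARD('n) + 1 < card T" by simp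
    then obtain \<alpha> where "sum \<alpha> T = 0" "(\<Sum>t\<in>T. \<alpha> t *s t) = 0" "\<exists>t\<in>T. \<alpha> t \<noteq> 0"
      using affine_dep[OF finT] by blast
    then show False using indep by blast
  qed
  show ?thesis
  proof (cases "\<exists>t\<in>T. 1 \<le> lam t")
    case True
    then obtain t where tT: "t \<in> T" and t1: "1 \<le> lam t" by blast
    define c where "c s = lam s - (if s = t then 1 else 0)" for s
    have "x - t \<in> cmb T (of_nat m)"
    proof (rule cmbI[where c=c])
      show "\<forall>v\<in>T. 0 \<le> c v" using lpos t1 by (auto simp: c_def less_imp_le)
      show "sum c T = of_nat m" using lsum tT finT by (simp add: c_def sum_subtractf)
      show "x - t = (\<Sum>v\<in>T. c v *s v)"
        unfolding c_def wsum_diff using lx wsum_delta[OF finT tT] by simp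
    qed
    then have "x - t \<in> cmb L (of_nat m)" using cmb_mono[OF finL TL] by blast
    then show ?thesis using tT TL by blast
  next
    case False
    then have lt1: "\<forall>t\<in>T. lam t < 1" by auto
    have Tne: "T \<noteq> {}" using lsum by auto
    have "sum lam T < sum (\<lambda>_. 1) T"
      by (rule sum_strict_mono[OF finT Tne]) (use lt1 in auto)
    then have "of_nat (Suc m) < (of_nat (card T) :: rat)" using lsum by simp
    then have "Suc m < card T" by linarith
    then have cT: "card T = Suc (Suc m)" and cn: "CARD('n) = Suc m" using cardT n by auto
    define \<mu> where "\<mu> t = 1 - lam t" for t
    have mupos: "0 < \<mu> t" if "t \<in> T" for t using lt1 that by (simp add: \<mu>_def)
    have mult1: "\<mu> t < 1" if "t \<in> T" for t using lpos that by (simp add: \<mu>_def)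
    define w where "w = (\<Sum>t\<in>T. \<mu> t *s t)"
    have musum: "sum \<mu> T = 1" using lsum cT by (simp add: \<mu>_def sum_subtractf)
    have w_eq: "w = (\<Sum>t\<in>T. t) - x" unfolding w_def \<mu>_def wsum_diff using lx by simp
    have wlat: "w \<in> lattice_pts" unfolding w_eq
      by (intro lat_diff lat_sum finT xlat) (use Tlat in auto)
    have wcmb: "w \<in> cmb T 1" unfolding w_def by (rule cmbI[where c=\<mu>]) (use mupos musum in \<open>auto simp: less_imp_le\<close>)
    have wL: "w \<in> L" using Lcl[OF TL] wcmb wlat by blast
    have wT: "w \<notin> T"
    proof
      assume wT: "w \<in> T"
      define \<alpha> where "\<alpha> t = \<mu> t - (if t = w then 1 else 0)" for t
      have "sum \<alpha> T = 0" using musum wT finT by (simp add: \<alpha>_def sum_subtractf)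
      moreover have "(\<Sum>t\<in>T. \<alpha> t *s t) = 0"
        unfolding \<alpha>_def wsum_diff wsum_delta[OF finT wT] w_def[symmetric] by simp
      ultimately have a0: "\<forall>t\<in>T. \<alpha> t = 0" by (rule indep)
      have "\<not> T \<subseteq> {w}" using cT card_mono[of "{w}" T] by auto
      then obtain t where "t \<in> T" "t \<noteq> w" by auto
      then show False using a0 mupos[of t] by (auto simp: \<alpha>_def)
    qed
    define \<tau> where "\<tau> = Min ((\<lambda>t. lam t / \<mu> t) ` T)"
    have "\<tau> \<in> (\<lambda>t. lam t / \<mu> t) ` T" unfolding \<tau>_def using finT Tne by (intro Min_in) auto
    then obtain tj where tjT: "tj \<in> T" and tj: "\<tau> = lam tj / \<mu> tj" by blast
    have tle: "\<tau> \<le> lam t / \<mu> t" if "t \<in> T" for t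
      unfolding \<tau>_def by (intro Min_le finite_imageI imageI finT that)
    have tpos: "0 < \<tau>" unfolding tj using lpos tjT mupos[OF tjT] by simp
    define lam' where "lam' t = lam t - \<tau> * \<mu> t" for t
    have nn: "0 \<le> lam' t" if "t \<in> T" for t
      using tle[OF that] mupos[OF that] by (simp add: lam'_def pos_le_divide_eq)
    have z: "lam' tj = 0" using tj mupos[OF tjT] by (simp add: lam'_def)
    define S where "S = {t\<in>T. 0 < lam' t}"
    define T' where "T' = insert w S"
    have wS: "w \<notin> S" using wT by (auto simp: S_def)
    have finS: "finite S" using finT by (simp add: S_def)
    have ST: "S \<subseteq> T" by (auto simp: S_def)
    have s1: "sum lam' T = of_nat (Suc m) - \<tau>"
      using lsum musum by (simp add: lam'_def sum_subtractf sum_distrib_left[symmetric])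
    have s2: "(\<Sum>t\<in>T. lam' t *s t) = x - \<tau> *s w"
      using lx unfolding lam'_def wsum_diff wsum_scale w_def by simp
    define \<nu> where "\<nu> = lam'(w := \<tau>)"
    have nuS: "sum \<nu> S = sum lam' S" "(\<Sum>t\<in>S. \<nu> t *s t) = (\<Sum>t\<in>S. lam' t *s t)"
      using wS by (auto simp: \<nu>_def intro!: sum.cong)
    have RT': "R T'"
      unfolding R_def
    proof (intro conjI exI[of _ \<nu>])
      show "T' \<subseteq> L" using wL TL ST by (auto simp: T'_def)
      show "\<forall>t\<in>T'. 0 < \<nu> t" using tpos wS by (auto simp: T'_def \<nu>_def S_def)
      show "sum \<nu> T' = of_nat (Suc m)"
        using s1 drop_zero(1)[of T lam', OF finT] nn wS finS nuS
        by (simp add: T'_def S_def \<nu>_def)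
      show "x = (\<Sum>t\<in>T'. \<nu> t *s t)"
        using s2 drop_zero(2)[of T lam', OF finT] nn wS finS nuS
        by (simp add: T'_def S_def \<nu>_def)
    qed
    have "S \<subseteq> T - {tj}" using z by (auto simp: S_def)
    then have "card S \<le> card (T - {tj})" using finT by (intro card_mono) auto
    then have c1: "card T' \<le> card T"
      using wS finS tjT finT card_Diff_singleton[of tj T] cT by (simp add: T'_def)
    have finT': "finite T'" using finS by (simp add: T'_def)
    have T'sub: "T' \<subseteq> cmb T 1" using wcmb ST cmb_point[OF finT] by (auto simp: T'_def)
    have sub: "cmb T' 1 \<subseteq> cmb T 1" using cmb_compose T'sub finT' by blast
    have tjn: "tj \<notin> cmb T' 1"
    proof
      assume "tj \<in> cmb T' 1"
      then obtain \<beta> where b0: "\<forall>v\<in>T'. 0 \<le> \<beta> v" and b1: "sum \<beta> T' = 1"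
        and b2: "tj = (\<Sum>v\<in>T'. \<beta> v *s v)" by (rule cmbE)
      have b1': "\<beta> w + sum \<beta> S = 1" using b1 wS finS by (simp add: T'_def)
      have b2': "tj = \<beta> w *s w + (\<Sum>v\<in>S. \<beta> v *s v)" using b2 wS finS by (simp add: T'_def)
      define \<alpha> where "\<alpha> t = (\<beta> w * \<mu> t + (if t \<in> S then \<beta> t else 0)) - (if t = tj then 1 else 0)" for t
      have "sum \<alpha> T = 0"
        unfolding \<alpha>_def using finT tjT b1' musum restrict_sum(1)[OF finT ST, of \<beta>]
        by (simp add: sum_subtractf sum.distrib sum_distrib_left[symmetric])
      moreover have "(\<Sum>t\<in>T. \<alpha> t *s t) = 0"
        unfolding \<alpha>_def wsum_diff wsum_add wsum_scale wsum_delta[OF finT tjT] restrict_sum(2)[OF finT ST]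
        using b2' w_def by simp
      ultimately have "\<forall>t\<in>T. \<alpha> t = 0" by (rule indep)
      then have "\<alpha> tj = 0" using tjT by blast
      moreover have "tj \<notin> S" using z by (simp add: S_def)
      ultimately have e1: "\<beta> w * \<mu> tj = 1" by (simp add: \<alpha>_def)
      have "\<beta> w \<le> 1" using b1 member_le_sum[of w T' \<beta>] b0 finT' by (simp add: T'_def)
      moreover have "0 \<le> \<beta> w" using b0 by (simp add: T'_def)
      ultimately have "\<beta> w * \<mu> tj \<le> \<mu> tj" using mupos[OF tjT] by (simp add: mult_left_le_one_le)
      then show False using e1 mult1[OF tjT] by simp
    qed
    have "tj \<in> cmb T 1 \<inter> lattice_pts" using cmb_point[OF finT tjT] tjT Tlat by blast
    then have "cmb T' 1 \<inter> lattice_pts \<subset> cmb T 1 \<inter> lattice_pts" using sub tjn by blast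
    then have c2: "card (cmb T' 1 \<inter> lattice_pts) < card (cmb T 1 \<inter> lattice_pts)"
      by (intro psubset_card_mono fincmb TL)
    have "f T' < f T" using c1 c2 by (simp add: f_def)
    then show ?thesis using minT[OF RT'] by simp
  qed
qed


lemma peel_V:
  fixes V :: "(rat ^ 'n) set"
  assumes finV: "finite V" and Vlat: "V \<subseteq> lattice_pts" and xlat: "x \<in> lattice_pts"
    and x: "x \<in> cmb V (of_nat (Suc m))" and n: "CARD('n) \<le> Suc m"
  shows "\<exists>p. p \<in> lattice_pts \<and> p \<in> cmb V 1 \<and> x - p \<in> cmb V (of_nat m)"
proof -
  define L where "L = cmb V 1 \<inter> lattice_pts"
  have finL: "finite L" unfolding L_def using finite_lat_cmb[OF finV] .
  have LV: "L \<subseteq> cmb V 1" unfolding L_def by blast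
  have Lcl: "cmb T 1 \<inter> lattice_pts \<subseteq> L" if "T \<subseteq> L" for T
  proof -
    have "finite T" using that finL finite_subset by blast
    then have "cmb T 1 \<subseteq> cmb V 1" using cmb_compose that LV by blast
    then show ?thesis unfolding L_def by blast
  qed
  have VL: "V \<subseteq> L" unfolding L_def using Vlat cmb_point[OF finV] by blast
  have "x \<in> cmb L (of_nat (Suc m))" using cmb_mono[OF finL VL] x by blast
  then obtain p where p: "p \<in> L" "x - p \<in> cmb L (of_nat m)"
    using peel[OF finL _ Lcl _ _ xlat n, of L] unfolding L_def by blast
  have "x - p \<in> cmb V (of_nat m)" using cmb_compose[OF finL LV p(2)] .
  then show ?thesis using p(1) unfolding L_def by blast
qed

lemma peel_many:
  fixes V :: "(rat ^ 'n) set"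
  assumes finV: "finite V" and Vlat: "V \<subseteq> lattice_pts" and n: "CARD('n) \<le> Suc a"
  shows "\<forall>x. x \<in> lattice_pts \<longrightarrow> x \<in> cmb V (of_nat (a + j)) \<longrightarrow>
     (\<exists>q. q \<in> lattice_pts \<and> q \<in> cmb V (of_nat j) \<and> x - q \<in> cmb V (of_nat a))"
proof (induction j)
  case 0
  then show ?case using cmb_zero lat_zero by fastforce
next
  case (Suc j)
  show ?case
  proof (intro allI impI)
    fix x assume xl: "x \<in> lattice_pts" and x: "x \<in> cmb V (of_nat (a + Suc j))"
    have "x \<in> cmb V (of_nat (Suc (a + j)))" using x by simp
    moreover have "CARD('n) \<le> Suc (a + j)" using n by simp
    ultimately obtain p where p: "p \<in> lattice_pts" "p \<in> cmb V 1" "x - p \<in> cmb V (of_nat (a + j))"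
      using peel_V[OF finV Vlat xl] by blast
    obtain q where q: "q \<in> lattice_pts" "q \<in> cmb V (of_nat j)" "x - p - q \<in> cmb V (of_nat a)"
      using Suc.IH lat_diff[OF xl p(1)] p(3) by blast
    have "p + q \<in> cmb V (1 + of_nat j)" using cmb_add[OF p(2) q(2)] .
    then have "p + q \<in> cmb V (of_nat (Suc j))" by simp
    moreover have "x - (p + q) \<in> cmb V (of_nat a)" using q(3) by (simp add: diff_diff_eq)
    ultimately show "\<exists>q. q \<in> lattice_pts \<and> q \<in> cmb V (of_nat (Suc j)) \<and> x - q \<in> cmb V (of_nat a)"
      using lat_add[OF p(1) q(1)] by blast
  qed
qed

lemma polytope_normal:
  fixes V :: "(rat ^ 'n) set"
  assumes finV: "finite V" and Vlat: "V \<subseteq> lattice_pts" and c1: "1 \<le> c" and n: "CARD('n) \<le> c + 1"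
  shows "\<forall>x. x \<in> lattice_pts \<longrightarrow> x \<in> cmb V (of_nat (k * c)) \<longrightarrow> 1 \<le> k \<longrightarrow>
     (\<exists>z. (\<forall>i<k. z i \<in> lattice_pts \<and> z i \<in> cmb V (of_nat c)) \<and> x = (\<Sum>i<k. z i))"
proof (induction k)
  case 0
  then show ?case by simp
next
  case (Suc k)
  show ?case
  proof (intro allI impI)
    fix x assume xl: "x \<in> lattice_pts" and x: "x \<in> cmb V (of_nat (Suc k * c))"
    show "\<exists>z. (\<forall>i<Suc k. z i \<in> lattice_pts \<and> z i \<in> cmb V (of_nat c)) \<and> x = (\<Sum>i<Suc k. z i)"
    proof (cases "k = 0")
      case True
      then show ?thesis using xl x by (intro exI[of _ "\<lambda>_. x"]) auto
    next
      case False
      have "c \<le> k * c" using False by simp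
      then have n': "CARD('n) \<le> Suc (k * c)" using n by linarith
      have "x \<in> cmb V (of_nat (k * c + c))" using x by (simp add: add.commute)
      then obtain q where q: "q \<in> lattice_pts" "q \<in> cmb V (of_nat c)" "x - q \<in> cmb V (of_nat (k * c))"
        using peel_many[OF finV Vlat n'] xl by blast
      obtain z where z: "\<forall>i<k. z i \<in> lattice_pts \<and> z i \<in> cmb V (of_nat c)" "x - q = (\<Sum>i<k. z i)"
        using Suc.IH lat_diff[OF xl q(1)] q(3) False by (meson less_one not_le)
      define z' where "z' = z(k := q)"
      have "(\<Sum>i<k. z' i) = (\<Sum>i<k. z i)" unfolding z'_def by (rule sum.cong) auto
      then have "x = (\<Sum>i<Suc k. z' i)" using z(2) by (simp add: z'_def algebra_simps)
      moreover have "\<forall>i<Suc k. z' i \<in> lattice_pts \<and> z' i \<in> cmb V (of_nat c)"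
        using z(1) q by (auto simp: z'_def less_Suc_eq)
      ultimately show ?thesis by blast
    qed
  qed
qed


lemma qpair_add: "qpair (s + t) u = qpair s u + qpair t u"
  unfolding qpair_def by (simp add: distrib_right sum.distrib)

lemma qpair_scale: "qpair (r *s s) u = r * qpair s u"
  unfolding qpair_def by (simp add: sum_distrib_left mult.assoc)

lemma dual_add: "s \<in> dual_cone \<sigma> \<Longrightarrow> t \<in> dual_cone \<sigma> \<Longrightarrow> s + t \<in> dual_cone \<sigma>"
  unfolding dual_cone_def by (simp add: qpair_add)

lemma dual_scale: "s \<in> dual_cone \<sigma> \<Longrightarrow> 0 \<le> r \<Longrightarrow> r *s s \<in> dual_cone \<sigma>"
  unfolding dual_cone_def by (simp add: qpair_scale)

lemma dual_zero: "0 \<in> dual_cone \<sigma>"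
  unfolding dual_cone_def qpair_def by simp

lemma dual_sum: "finite I \<Longrightarrow> (\<forall>i\<in>I. f i \<in> dual_cone \<sigma>) \<Longrightarrow> sum f I \<in> dual_cone \<sigma>"
  by (induction I rule: finite_induct) (auto simp: dual_zero dual_add)

lemma denom_exists:
  fixes s :: "rat ^ 'n"
  shows "\<exists>d::nat. 1 \<le> d \<and> of_nat d *s s \<in> lattice_pts"
proof -
  define D where "D = (\<Prod>i\<in>UNIV. snd (quotient_of (s $ i)))"
  have Dpos: "0 < D" unfolding D_def by (intro prod_pos) (simp add: quotient_of_denom_pos')
  have "(of_int D :: rat) * s $ i \<in> \<int>" for i
  proof -
    obtain a b where ab: "quotient_of (s $ i) = (a, b)" by (cases "quotient_of (s $ i)")
    have bpos: "0 < b" using quotient_of_denom_pos[OF ab] .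
    have "snd (quotient_of (s $ i)) dvd D" unfolding D_def by (rule dvd_prodI) auto
    then have "b dvd D" using ab by simp
    then obtain r where r: "D = b * r" by (auto elim: dvdE)
    have "(of_int D :: rat) * s $ i = of_int b * of_int r * (of_int a / of_int b)"
      using quotient_of_div[OF ab] r by simp
    also have "\<dots> = of_int (r * a)" using bpos by simp
    finally show ?thesis by simp
  qed
  moreover have "(of_nat (nat D) :: rat) = of_int D" using Dpos by simp
  ultimately have "of_nat (nat D) *s s \<in> lattice_pts" by (simp add: lat_iff)
  moreover have "1 \<le> nat D" using Dpos by simp
  ultimately show ?thesis by blast
qed

lemma cmb_split:
  fixes V :: "(rat ^ 'n) set"
  assumes finV: "finite V" and w: "w \<in> dual_cone \<sigma>"
    and y: "y \<in> cmb (V \<union> (\<lambda>v. v + w) ` V) a"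
  shows "\<exists>q s. y = q + s \<and> q \<in> cmb V a \<and> s \<in> dual_cone \<sigma>"
proof -
  let ?V2 = "V \<union> (\<lambda>v. v + w) ` V"
  obtain \<beta> where b: "\<forall>v\<in>?V2. 0 \<le> \<beta> v" "sum \<beta> ?V2 = a" "y = (\<Sum>v\<in>?V2. \<beta> v *s v)"
    using y by (rule cmbE)
  define qf where "qf t = (if t \<in> V then t else t - w)" for t
  define sf where "sf t = (if t \<in> V then 0 else w)" for t
  have qfV: "qf t \<in> V" if "t \<in> ?V2" for t using that by (auto simp: qf_def)
  have split: "t = qf t + sf t" for t by (simp add: qf_def sf_def)
  have fin2: "finite ?V2" using finV by simp
  have "y = (\<Sum>t\<in>?V2. \<beta> t *s qf t) + (\<Sum>t\<in>?V2. \<beta> t *s sf t)"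
    unfolding b(3) sum.distrib[symmetric] vec.scale_right_distrib[symmetric] split[symmetric] ..
  moreover have "(\<Sum>t\<in>?V2. \<beta> t *s qf t) \<in> cmb V (\<Sum>t\<in>?V2. \<beta> t * 1)"
  proof (rule cmb_sum[OF fin2], rule ballI)
    fix t assume "t \<in> ?V2"
    then show "\<beta> t *s qf t \<in> cmb V (\<beta> t * 1)"
      using cmb_point[OF finV qfV] b(1) by (intro cmb_scale) auto
  qed
  moreover have "(\<Sum>t\<in>?V2. \<beta> t *s sf t) \<in> dual_cone \<sigma>"
  proof (rule dual_sum[OF fin2], rule ballI)
    fix t assume "t \<in> ?V2"
    then have "0 \<le> \<beta> t" using b(1) by blast
    moreover have "sf t \<in> dual_cone \<sigma>" using w dual_zero[of \<sigma>] by (simp add: sf_def)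
    ultimately show "\<beta> t *s sf t \<in> dual_cone \<sigma>" by (intro dual_scale)
  qed
  ultimately show ?thesis using b(2) by auto
qed


theorem theorem3p5p6:
  fixes \<sigma> P :: "(rat ^ 'n) set" and e :: nat
  assumes "polyhedral_cone \<sigma>" and "strongly_convex \<sigma>"
    and "P \<in> Pol \<sigma>"
    and "e \<ge> 1" and "e \<ge> CARD('n) - 1"
  shows "normal_poly (scale_poly e P)"
proof -
  obtain Q where LQ: "lattice_polytope Q" and PQ: "P = {q + s | q s. q \<in> Q \<and> s \<in> dual_cone \<sigma>}"
    using assms(3) unfolding Pol_def by blast
  obtain V where finV: "finite V" and neV: "V \<noteq> {}" and Vlat: "V \<subseteq> lattice_pts"
    and QV: "Q = cmb V 1"
    using LQ unfolding lattice_polytope_def qconv_cmb by blast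
  have e1: "1 \<le> e" and en: "CARD('n) \<le> e + 1" using assms(4,5) by auto
  have scale2: "scale_poly k (scale_poly e S) = (\<lambda>x. of_nat (k * e) *s x) ` S" for k S
    unfolding scale_poly_def image_image by (simp add: vec.scale_scale mult.commute)
  show ?thesis
    unfolding normal_poly_def
  proof (intro allI impI)
    fix k :: nat assume k1: "1 \<le> k"
    show "scale_poly k (scale_poly e P) \<inter> lattice_pts =
       {(\<Sum>i<k. m i) | m. \<forall>i<k. m i \<in> scale_poly e P \<inter> lattice_pts}"
    proof (rule equalityI; rule subsetI)
      fix x assume "x \<in> scale_poly k (scale_poly e P) \<inter> lattice_pts"
      then obtain p where xl: "x \<in> lattice_pts" and pP: "p \<in> P" and xp: "x = of_nat (k * e) *s p"
        unfolding scale2 by blast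
      obtain q s where pqs: "p = q + s" and qQ: "q \<in> cmb V 1" and sD: "s \<in> dual_cone \<sigma>"
        using pP unfolding PQ QV by blast
      obtain d :: nat where d1: "1 \<le> d" and wl: "of_nat d *s s \<in> lattice_pts"
        using denom_exists by blast
      define w where "w = of_nat d *s s"
      have wD: "w \<in> dual_cone \<sigma>" unfolding w_def using sD by (intro dual_scale) auto
      define V2 where "V2 = V \<union> (\<lambda>v. v + w) ` V"
      have finV2: "finite V2" unfolding V2_def using finV by simp
      have V2lat: "V2 \<subseteq> lattice_pts" unfolding V2_def using Vlat wl w_def lat_add by blast
      have qV2: "q \<in> cmb V2 1" using cmb_mono[OF finV2, of V] qQ by (auto simp: V2_def)
      obtain c where c: "\<forall>v\<in>V. 0 \<le> c v" "sum c V = 1" "q = (\<Sum>v\<in>V. c v *s v)"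
        using qQ by (rule cmbE)
      have "(\<Sum>v\<in>V. c v *s (v + w)) \<in> cmb V2 (\<Sum>v\<in>V. c v * 1)"
      proof (rule cmb_sum[OF finV], rule ballI)
        fix v assume vV: "v \<in> V"
        have "v + w \<in> cmb V2 1" using vV by (intro cmb_point finV2) (auto simp: V2_def)
        then show "c v *s (v + w) \<in> cmb V2 (c v * 1)" using c(1) vV by (intro cmb_scale) auto
      qed
      moreover have "(\<Sum>v\<in>V. c v *s (v + w)) = q + w"
        using c by (simp add: vec.scale_right_distrib sum.distrib vec.scale_sum_left[symmetric])
      ultimately have qwV2: "q + w \<in> cmb V2 1" using c(2) by simp
      define r :: rat where "r = 1 / of_nat d"
      have r0: "0 \<le> r" "r \<le> 1" using d1 by (auto simp: r_def)
      have "(1 - r) *s q + r *s (q + w) \<in> cmb V2 ((1 - r) * 1 + r * 1)"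
        using r0 by (intro cmb_add cmb_scale qV2 qwV2) auto
      moreover have "(1 - r) *s q + r *s (q + w) = p"
        unfolding pqs w_def r_def using d1 by (simp add: vec_eq_iff field_simps)
      ultimately have pV2: "p \<in> cmb V2 1" by simp
      have "x \<in> cmb V2 (of_nat (k * e))" unfolding xp using cmb_scale[OF pV2, of "of_nat (k * e)"] by simp
      then obtain z where z: "\<forall>i<k. z i \<in> lattice_pts \<and> z i \<in> cmb V2 (of_nat e)" "x = (\<Sum>i<k. z i)"
        using polytope_normal[OF finV2 V2lat e1 en] xl k1 by blast
      have V2P: "y \<in> P" if yV: "y \<in> cmb V2 1" for y
      proof -
        obtain q' s' where "y = q' + s'" "q' \<in> cmb V 1" "s' \<in> dual_cone \<sigma>"
          using cmb_split[OF finV wD yV[unfolded V2_def]] by blast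
        then show ?thesis unfolding PQ QV by blast
      qed
      have "z i \<in> scale_poly e P \<inter> lattice_pts" if "i < k" for i
      proof -
        have zi: "z i \<in> lattice_pts" "z i \<in> cmb V2 (of_nat e)" using z(1) that by auto
        have "(1 / of_nat e) *s z i \<in> cmb V2 ((1 / of_nat e) * of_nat e)"
          using zi(2) by (intro cmb_scale) auto
        then have "(1 / of_nat e) *s z i \<in> P" using e1 V2P by simp
        moreover have "z i = of_nat e *s ((1 / of_nat e) *s z i)" using e1 by (simp add: vec.scale_scale)
        ultimately show ?thesis unfolding scale_poly_def using zi(1) by blast
      qed
      then show "x \<in> {(\<Sum>i<k. m i) | m. \<forall>i<k. m i \<in> scale_poly e P \<inter> lattice_pts}"
        using z(2) by blast
    next
      fix x assume "x \<in> {(\<Sum>i<k. m i) | m. \<forall>i<k. m i \<in> scale_poly e P \<inter> lattice_pts}"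
      then obtain m where xm: "x = (\<Sum>i<k. m i)" and m: "\<forall>i<k. m i \<in> scale_poly e P \<inter> lattice_pts"
        by blast
      have "\<forall>i\<in>{..<k}. \<exists>qs. m i = of_nat e *s (fst qs + snd qs) \<and> fst qs \<in> cmb V 1 \<and> snd qs \<in> dual_cone \<sigma>"
      proof
        fix i assume "i \<in> {..<k}"
        then have "m i \<in> scale_poly e P" using m by auto
        then obtain q s where "m i = of_nat e *s (q + s)" "q \<in> cmb V 1" "s \<in> dual_cone \<sigma>"
          unfolding scale_poly_def PQ QV by blast
        then show "\<exists>qs. m i = of_nat e *s (fst qs + snd qs) \<and> fst qs \<in> cmb V 1 \<and> snd qs \<in> dual_cone \<sigma>"
          by (intro exI[of _ "(q, s)"]) simp
      qed
      then obtain g where g: "\<forall>i\<in>{..<k}. m i = of_nat e *s (fst (g i) + snd (g i)) \<and> fst (g i) \<in> cmb V 1 \<and> snd (g i) \<in> dual_cone \<sigma>"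
        by (rule bchoice[elim_format]) blast
      define qb where "qb = (1 / of_nat k) *s (\<Sum>i<k. fst (g i))"
      define sb where "sb = (1 / of_nat k) *s (\<Sum>i<k. snd (g i))"
      have "(\<Sum>i<k. fst (g i)) \<in> cmb V (\<Sum>i<k. 1)" using g by (intro cmb_sum) auto
      then have "qb \<in> cmb V ((1 / of_nat k) * of_nat k)" unfolding qb_def by (intro cmb_scale) auto
      then have qbV: "qb \<in> cmb V 1" using k1 by simp
      have sbD: "sb \<in> dual_cone \<sigma>" unfolding sb_def using g by (intro dual_scale dual_sum) auto
      have pbP: "qb + sb \<in> P" unfolding PQ QV using qbV sbD by blast
      have "x = (\<Sum>i<k. of_nat e *s (fst (g i) + snd (g i)))" unfolding xm using g by (intro sum.cong) auto
      also have "\<dots> = of_nat (k * e) *s (qb + sb)"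
        unfolding qb_def sb_def using k1
        by (simp add: vec.scale_sum_right[symmetric] vec.scale_right_distrib[symmetric] sum.distrib vec.scale_scale)
      finally have "x \<in> scale_poly k (scale_poly e P)" unfolding scale2 using pbP by blast
      moreover have "x \<in> lattice_pts" unfolding xm using m by (intro lat_sum) auto
      ultimately show "x \<in> scale_poly k (scale_poly e P) \<inter> lattice_pts" by blast
    qed
  qed
qed

end
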